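(* Let $D:\mathcal{A}^W\to\mathcal{A}^W$ be a linear operator that is triangular, i.e. $D(\mathcal{A}^W_\lambda)\subseteq\mathcal{A}^W_\lambda$ for every $\lambda\in\mathcal{P}^+$. Let $\{s_\lambda\}_{\lambda\in\mathcal{P}^+}$ be a basis of $\mathcal{A}^W$ such that, for all $\lambda\in\mathcal{P}^+$, $$m_\lambda=\sum_{\mu\in\mathcal{P}^+,\ \mu\preceq\lambda}a_{\lambda\mu}\,s_\mu,\quad a_{\lambda\lambda}=1,\qquad D\,m_\lambda=\sum_{\mu\in\mathcal{P}^+,\ \mu\preceq\lambda}b_{\lambda\mu}\,s_\mu,\quad b_{\lambda\lambda}=\epsilon_\lambda .$$ Assume $D$ is regular: $\epsilon_\mu\neq\epsilon_\lambda$ whenever $\mu,\lambda\in\mathcal{P}^+$ with $\mu\prec\lambda$. Fix $\lambda\in\mathcal{P}^+$ and let $\lambda^{(1)},\lambda^{(2)},\dots,\lambda^{(n)}=\lambda$ be any enumeration of the finite set $\{\mu\in\mathcal{P}^+\mid\mu\preceq\lambda\}$ that refines the partial order (i.e. $\lambda^{(i)}\prec\lambda^{(j)}$ implies $i<j$). Set $\mathcal{E}_\lambda=\prod_{\mu\in\mathcal{P}^+,\ \mu\prec\lambda}(\epsilon_\lambda-\epsilon_\mu)$ and, for $n\ge j>k\ge1$, $d_{\lambda^{(j)}\lambda^{(k)}}=b_{\lambda^{(j)}\lambda^{(k)}}-\epsilon_\lambda\,a_{\lambda^{(j)}\lambda^{(k)}}$. Let $M$ be the $n\times n$ (lower Hessenberg)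 matrix whose first column is $(m_{\lambda^{(1)}},\dots,m_{\lambda^{(n)}})^T$ and whose $(k+1)$-st column, for $k=1,\dots,n-1$, has entry in row $j$ equal to $0$ if $j<k$, equal to $\epsilon_{\lambda^{(k)}}-\epsilon_{\lambda}$ if $j=k$, and equal to $d_{\lambda^{(j)}\lambda^{(k)}}$ if $j>k$. Then $p_\lambda:=\mathcal{E}_\lambda^{-1}\det M$ satisfies $D p_\lambda=\epsilon_\lambda p_\lambda$ and $p_\lambda=m_\lambda+\sum_{\mu\in\mathcal{P}^+,\ \mu\prec\lambda}c_{\lambda\mu}m_\mu$ for some coefficients $c_{\lambda\mu}$; i.e. $\{p_\lambda\}_{\lambda\in\mathcal{P}^+}$ is the monic basis of $\mathcal{A}^W$ diagonalizing $D$.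
   Context: $E$ is a real Euclidean space with inner product $\langle\cdot,\cdot\rangle$ spanned by an irreducible root system $R$ with Weyl group $W$ and positive roots $R^+$; $\alpha^\vee=2\alpha/\langle\alpha,\alpha\rangle$. $\mathcal{Q}^+=\mathrm{Span}_{\mathbb{N}}(R^+)$; $\mathcal{P}=\{\lambda\in E\mid\langle\lambda,\alpha^\vee\rangle\in\mathbb{Z}\ \forall\alpha\in R\}$ is the weight lattice and $\mathcal{P}^+=\{\lambda\in E\mid\langle\lambda,\alpha^\vee\rangle\in\mathbb{N}\ \forall\alpha\in R^+\}$ the dominant weights; partial order $\lambda\succeq\mu$ iff $\lambda-\mu\in\mathcal{Q}^+$. The group algebra $\mathbb{R}[\mathcal{P}]$ is spanned by formal exponentials $e^\lambda$ ($\lambda\in\mathcal{P}$) with $e^\lambda e^\mu=e^{\lambda+\mu}$, and $\mathcal{A}^W$ is its subspace of $W$-invariant elements, with basis the monomials $m_\lambda=\sum_{\mu\in W(\lambda)}e^\mu$, $\lambda\in\mathcal{P}^+$ ($W(\lambda)$ the $W$-orbit). For $\lambda\in\mathcal{P}^+$, $\mathcal{A}^W_\lambda=\mathrm{Span}\{m_\mu\mid\mu\in\mathcal{P}^+,\ \mu\preceq\lambda\}$. *)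

theory Defs
  imports "HOL-Analysis.Euclidean_Space" "HOL-Library.Poly_Mapping" "Jordan_Normal_Form.Determinant"
begin

definition coroot :: "'a::euclidean_space \<Rightarrow> 'a" where
  "coroot \<alpha> = (2 / (inner \<alpha> \<alpha>)) *\<^sub>R \<alpha>"

definition refl :: "'a::euclidean_space \<Rightarrow> 'a \<Rightarrow> 'a" where
  "refl \<alpha> x = x - (inner x (coroot \<alpha>)) *\<^sub>R \<alpha>"

definition root_system :: "'a::euclidean_space set \<Rightarrow> bool" where
  "root_system R \<longleftrightarrow> finite R \<and> 0 \<notin> R \<and> span R = UNIV \<and>
     (\<forall>\<alpha>\<in>R. refl \<alpha> ` R = R) \<and>
     (\<forall>\<alpha>\<in>R. \<forall>\<beta>\<in>R. inner \<beta> (coroot \<alpha>) \<in> \<int>)"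

definition irreducible_rs :: "'a::euclidean_space set \<Rightarrow> bool" where
  "irreducible_rs R \<longleftrightarrow> \<not> (\<exists>A B. A \<union> B = R \<and> A \<inter> B = {} \<and> A \<noteq> {} \<and> B \<noteq> {} \<and>
       (\<forall>\<alpha>\<in>A. \<forall>\<beta>\<in>B. inner \<alpha> \<beta> = 0))"

definition positive_system :: "'a::euclidean_space set \<Rightarrow> 'a set \<Rightarrow> bool" where
  "positive_system R Rp \<longleftrightarrow> (\<exists>v. (\<forall>\<alpha>\<in>R. inner \<alpha> v \<noteq> 0) \<and> Rp = {\<alpha>\<in>R. inner \<alpha> v > 0})"

inductive_set weyl_group :: "'a::euclidean_space set \<Rightarrow> ('a \<Rightarrow> 'a) set" for R where
  weyl_id: "id \<in> weyl_group R"
| weyl_step: "w \<in> weyl_group R \<Longrightarrow> \<alpha> \<in> R \<Longrightarrow> refl \<alpha> \<circ> w \<in> weyl_group R"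

definition weights :: "'a::euclidean_space set \<Rightarrow> 'a set" where
  "weights R = {lm. \<forall>\<alpha>\<in>R. inner lm (coroot \<alpha>) \<in> \<int>}"

definition dominant :: "'a::euclidean_space set \<Rightarrow> 'a set" where
  "dominant Rp = {lm. \<forall>\<alpha>\<in>Rp. inner lm (coroot \<alpha>) \<in> \<nat>}"

definition Qplus :: "'a::euclidean_space set \<Rightarrow> 'a set" where
  "Qplus Rp = {x. \<exists>n::'a \<Rightarrow> nat. x = (\<Sum>\<alpha>\<in>Rp. real (n \<alpha>) *\<^sub>R \<alpha>)}"

definition dom_le :: "'a::euclidean_space set \<Rightarrow> 'a \<Rightarrow> 'a \<Rightarrow> bool" where
  "dom_le Rp \<mu> lm \<longleftrightarrow> lm - \<mu> \<in> Qplus Rp"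

definition dom_lt :: "'a::euclidean_space set \<Rightarrow> 'a \<Rightarrow> 'a \<Rightarrow> bool" where
  "dom_lt Rp \<mu> lm \<longleftrightarrow> dom_le Rp \<mu> lm \<and> \<mu> \<noteq> lm"

section \<open>Group algebra R[P] (as finitely supported functions, with convolution product)\<close>

definition gexp :: "'a::euclidean_space \<Rightarrow> ('a \<Rightarrow>\<^sub>0 real)" where
  "gexp \<mu> = Poly_Mapping.single \<mu> 1"

definition gcst :: "real \<Rightarrow> ('a::euclidean_space \<Rightarrow>\<^sub>0 real)" where
  "gcst c = Poly_Mapping.single 0 c"

definition scal :: "real \<Rightarrow> ('a::euclidean_space \<Rightarrow>\<^sub>0 real) \<Rightarrow> ('a \<Rightarrow>\<^sub>0 real)" where
  "scal c f = gcst c * f"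

definition worbit :: "'a::euclidean_space set \<Rightarrow> 'a \<Rightarrow> 'a set" where
  "worbit R lm = (\<lambda>w. w lm) ` weyl_group R"

definition monW :: "'a::euclidean_space set \<Rightarrow> 'a \<Rightarrow> ('a \<Rightarrow>\<^sub>0 real)" where
  "monW R lm = (\<Sum>\<mu>\<in>worbit R lm. gexp \<mu>)"

definition AW :: "'a::euclidean_space set \<Rightarrow> ('a \<Rightarrow>\<^sub>0 real) set" where
  "AW R = {f. Poly_Mapping.keys f \<subseteq> weights R \<and>
             (\<forall>w\<in>weyl_group R. \<forall>\<mu>. Poly_Mapping.lookup f (w \<mu>) = Poly_Mapping.lookup f \<mu>)}"

definition below :: "'a::euclidean_space set \<Rightarrow> 'a \<Rightarrow> 'a set" where
  "below Rp lm = {\<mu>\<in>dominant Rp. dom_le Rp \<mu> lm}"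

definition strictly_below :: "'a::euclidean_space set \<Rightarrow> 'a \<Rightarrow> 'a set" where
  "strictly_below Rp lm = {\<mu>\<in>dominant Rp. dom_lt Rp \<mu> lm}"

definition AWl :: "'a::euclidean_space set \<Rightarrow> 'a set \<Rightarrow> 'a \<Rightarrow> ('a \<Rightarrow>\<^sub>0 real) set" where
  "AWl R Rp lm = {f. \<exists>c. f = (\<Sum>\<mu>\<in>below Rp lm. scal (c \<mu>) (monW R \<mu>))}"

definition is_basis_AW :: "'a::euclidean_space set \<Rightarrow> 'a set \<Rightarrow> ('a \<Rightarrow> ('a \<Rightarrow>\<^sub>0 real)) \<Rightarrow> bool" where
  "is_basis_AW R Rp s \<longleftrightarrow>
     (\<forall>lm\<in>dominant Rp. s lm \<in> AW R) \<and>
     (\<forall>f\<in>AW R. \<exists>S c. finite S \<and> S \<subseteq> dominant Rp \<and> f = (\<Sum>\<mu>\<in>S. scal (c \<mu>) (s \<mu>))) \<and>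
     (\<forall>S c. finite S \<longrightarrow> S \<subseteq> dominant Rp \<longrightarrow> (\<Sum>\<mu>\<in>S. scal (c \<mu>) (s \<mu>)) = 0 \<longrightarrow> (\<forall>\<mu>\<in>S. c \<mu> = 0))"

definition linear_on_AW :: "'a::euclidean_space set \<Rightarrow> (('a \<Rightarrow>\<^sub>0 real) \<Rightarrow> ('a \<Rightarrow>\<^sub>0 real)) \<Rightarrow> bool" where
  "linear_on_AW R D \<longleftrightarrow> D ` AW R \<subseteq> AW R \<and>
     (\<forall>f\<in>AW R. \<forall>g\<in>AW R. D (f + g) = D f + D g) \<and>
     (\<forall>c. \<forall>f\<in>AW R. D (scal c f) = scal c (D f))"

text \<open>The lower Hessenberg matrix M (0-based indices: row i is row i+1, column j is column j+1).\<close>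
definition hess_matrix :: "'a::euclidean_space set \<Rightarrow> nat \<Rightarrow> (nat \<Rightarrow> 'a) \<Rightarrow> 'a \<Rightarrow>
     ('a \<Rightarrow> real) \<Rightarrow> ('a \<Rightarrow> 'a \<Rightarrow> real) \<Rightarrow> ('a \<Rightarrow> 'a \<Rightarrow> real) \<Rightarrow> ('a \<Rightarrow>\<^sub>0 real) mat" where
  "hess_matrix R n lam lm \<epsilon> a b = mat n n (\<lambda>(i, j).
      if j = 0 then monW R (lam (i + 1))
      else if i + 1 < j then 0
      else if i + 1 = j then gcst (\<epsilon> (lam j) - \<epsilon> lm)
      else gcst (b (lam (i + 1)) (lam j) - \<epsilon> lm * a (lam (i + 1)) (lam j)))"

end

theory Submission
  imports Defs
begin

lemma scal_lookup: "Poly_Mapping.lookup (scal c f) x = c * Poly_Mapping.lookup f x"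
  unfolding scal_def gcst_def mult_map_scale_conv_mult[symmetric]
  by transfer (simp add: when_def)

lemma gcst_hom: "comm_ring_hom (gcst :: real \<Rightarrow> ('a::euclidean_space \<Rightarrow>\<^sub>0 real))"
  by unfold_locales (auto simp: gcst_def mult_single one_poly_mapping_def single_add)

lemma scal_add_right: "scal c (f + g) = scal c f + scal c g"
  by (simp add: scal_def distrib_left)
lemma scal_add_left: "scal (c + d) f = scal c f + scal d f"
  by (simp add: scal_def gcst_def distrib_right single_add)
lemma scal_scal: "scal c (scal d f) = scal (c * d) f"
  by (simp add: scal_def gcst_def mult.assoc[symmetric] mult_single)
lemma scal_zero[simp]: "scal 0 f = 0"
  by (simp add: scal_def gcst_def)
lemma scal_zero_right[simp]: "scal c 0 = 0"
  by (simp add: scal_def)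
lemma scal_one[simp]: "scal 1 f = f"
  by (simp add: scal_def gcst_def one_poly_mapping_def[symmetric])
lemma scal_sum_right: "scal c (sum f I) = (\<Sum>i\<in>I. scal c (f i))"
  by (simp add: scal_def sum_distrib_left)
lemma scal_sum_left: "scal (sum f I) g = (\<Sum>i\<in>I. scal (f i) g)"
  by (induction I rule: infinite_finite_induct) (auto simp: scal_add_left)
lemma scal_gcst: "gcst c * f = scal c f" by (simp add: scal_def)


lemma AW_add: "f \<in> AW R \<Longrightarrow> g \<in> AW R \<Longrightarrow> f + g \<in> AW R"
  unfolding AW_def using keys_add[of f g] by (auto simp: lookup_add)

lemma AW_scal: "f \<in> AW R \<Longrightarrow> scal c f \<in> AW R"
proof -
  assume f: "f \<in> AW R"
  have "Poly_Mapping.keys (scal c f) \<subseteq> Poly_Mapping.keys f"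
    by (auto simp: scal_lookup in_keys_iff)
  with f show ?thesis unfolding AW_def by (auto simp: scal_lookup)
qed

lemma AW_zero: "0 \<in> AW R" unfolding AW_def by auto

lemma AW_sum: "(\<And>i. i \<in> I \<Longrightarrow> f i \<in> AW R) \<Longrightarrow> sum f I \<in> AW R"
  by (induction I rule: infinite_finite_induct) (auto simp: AW_zero AW_add)

lemma D_zero: "linear_on_AW R D \<Longrightarrow> D 0 = 0"
  unfolding linear_on_AW_def using AW_zero[of R]
  by (metis scal_zero)

lemma D_sum:
  assumes "linear_on_AW R D" "\<And>i. i \<in> I \<Longrightarrow> f i \<in> AW R"
  shows "D (\<Sum>i\<in>I. scal (c i) (f i)) = (\<Sum>i\<in>I. scal (c i) (D (f i)))"
  using assms(2)
proof (induction I rule: infinite_finite_induct)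
  case (infinite A) then show ?case using D_zero[OF assms(1)] by simp
next
  case empty then show ?case using D_zero[OF assms(1)] by simp
next
  case (insert x F)
  have "D (\<Sum>i\<in>insert x F. scal (c i) (f i)) = D (scal (c x) (f x) + (\<Sum>i\<in>F. scal (c i) (f i)))"
    using insert by simp
  also have "\<dots> = D (scal (c x) (f x)) + D (\<Sum>i\<in>F. scal (c i) (f i))"
    using assms(1) insert.prems AW_scal AW_sum unfolding linear_on_AW_def by (simp add: AW_scal AW_sum)
  also have "\<dots> = scal (c x) (D (f x)) + (\<Sum>i\<in>F. scal (c i) (D (f i)))"
    using assms(1) insert unfolding linear_on_AW_def by simp
  finally show ?case using insert by simp
qed

lemma dom_le_refl: "dom_le Rp x x"
  unfolding dom_le_def Qplus_def by (rule CollectI, rule exI[of _ "\<lambda>_. 0"]) simp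

lemma dom_le_trans: "dom_le Rp x y \<Longrightarrow> dom_le Rp y z \<Longrightarrow> dom_le Rp x z"
proof -
  assume "dom_le Rp x y" "dom_le Rp y z"
  then obtain n1 n2 where "y - x = (\<Sum>\<alpha>\<in>Rp. real (n1 \<alpha>) *\<^sub>R \<alpha>)" "z - y = (\<Sum>\<alpha>\<in>Rp. real (n2 \<alpha>) *\<^sub>R \<alpha>)"
    unfolding dom_le_def Qplus_def by auto
  then have "z - x = (\<Sum>\<alpha>\<in>Rp. real (n1 \<alpha> + n2 \<alpha>) *\<^sub>R \<alpha>)"
    by (simp add: scaleR_add_left sum.distrib algebra_simps)
  then show ?thesis unfolding dom_le_def Qplus_def mem_Collect_eq
    by (rule exI[of _ "\<lambda>a. n1 a + n2 a"])
qed


lemma cofactor_indep: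
  assumes "A \<in> carrier_mat n n" "B \<in> carrier_mat n n"
    "\<And>i j. i < n \<Longrightarrow> j < n \<Longrightarrow> j \<noteq> 0 \<Longrightarrow> A $$ (i,j) = B $$ (i,j)"
  shows "cofactor A i 0 = cofactor B i 0"
proof -
  have "mat_delete A i 0 = mat_delete B i 0"
    unfolding mat_delete_def using assms by (intro eq_matI) auto
  then show ?thesis unfolding cofactor_def by simp
qed

lemma col_comb_zero:
  fixes A :: "'a::comm_ring_1 mat"
  assumes A: "A \<in> carrier_mat n n" and j: "0 < j" "j < n"
  shows "(\<Sum>i<n. A $$ (i,j) * cofactor A i 0) = 0"
proof -
  define B where "B = mat n n (\<lambda>(i,k). if k = 0 then A $$ (i,j) else A $$ (i,k))"
  have B: "B \<in> carrier_mat n n" unfolding B_def by simp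
  have "col B 0 = col B j" unfolding B_def using j by (intro eq_vecI) auto
  then have "det B = 0" using det_identical_columns[OF B, of 0 j] j by auto
  moreover have "det B = (\<Sum>i<n. B $$ (i,0) * cofactor B i 0)"
    using laplace_expansion_column[OF B, of 0] j by simp
  moreover have "\<And>i. i < n \<Longrightarrow> B $$ (i,0) * cofactor B i 0 = A $$ (i,j) * cofactor A i 0"
  proof -
    fix i assume i: "i < n"
    have "cofactor B i 0 = cofactor A i 0"
      by (rule cofactor_indep[OF B A]) (auto simp: B_def)
    then show "B $$ (i,0) * cofactor B i 0 = A $$ (i,j) * cofactor A i 0"
      using i j by (simp add: B_def)
  qed
  ultimately show ?thesis by simp
qed


theorem mainTheorem1:
  fixes R Rp :: "'a::euclidean_space set"
    and D :: "('a \<Rightarrow>\<^sub>0 real) \<Rightarrow> ('a \<Rightarrow>\<^sub>0 real)"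
    and s :: "'a \<Rightarrow> ('a \<Rightarrow>\<^sub>0 real)"
    and a b :: "'a \<Rightarrow> 'a \<Rightarrow> real" and \<epsilon> :: "'a \<Rightarrow> real"
    and lm :: 'a and n :: nat and lam :: "nat \<Rightarrow> 'a"
  assumes rs: "root_system R" and irr: "irreducible_rs R" and pos: "positive_system R Rp"
    and lin: "linear_on_AW R D"
    and tri: "\<forall>\<nu>\<in>dominant Rp. D ` AWl R Rp \<nu> \<subseteq> AWl R Rp \<nu>"
    and basis: "is_basis_AW R Rp s"
    and a_exp: "\<forall>\<nu>\<in>dominant Rp. monW R \<nu> = (\<Sum>\<mu>\<in>below Rp \<nu>. scal (a \<nu> \<mu>) (s \<mu>)) \<and> a \<nu> \<nu> = 1"
    and b_exp: "\<forall>\<nu>\<in>dominant Rp. D (monW R \<nu>) = (\<Sum>\<mu>\<in>below Rp \<nu>. scal (b \<nu> \<mu>) (s \<mu>)) \<and> b \<nu> \<nu> = \<epsilon> \<nu>"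
    and ab_zero: "\<forall>\<nu>\<in>dominant Rp. \<forall>\<mu>. \<mu> \<notin> below Rp \<nu> \<longrightarrow> a \<nu> \<mu> = 0 \<and> b \<nu> \<mu> = 0"
    and regular: "\<forall>\<mu>\<in>dominant Rp. \<forall>\<nu>\<in>dominant Rp. dom_lt Rp \<mu> \<nu> \<longrightarrow> \<epsilon> \<mu> \<noteq> \<epsilon> \<nu>"
    and lam_dom: "lm \<in> dominant Rp"
    and n_def: "n = card (below Rp lm)"
    and enum: "bij_betw lam {1..n} (below Rp lm)"
    and enum_last: "lam n = lm"
    and enum_refines: "\<forall>i\<in>{1..n}. \<forall>j\<in>{1..n}. dom_lt Rp (lam i) (lam j) \<longrightarrow> i < j"
  shows "let E = (\<Prod>\<mu>\<in>strictly_below Rp lm. \<epsilon> lm - \<epsilon> \<mu>);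
             p = scal (1 / E) (det (hess_matrix R n lam lm \<epsilon> a b))
         in D p = scal (\<epsilon> lm) p \<and>
            (\<exists>c. p = monW R lm + (\<Sum>\<mu>\<in>strictly_below Rp lm. scal (c \<mu>) (monW R \<mu>)))"
proof -
  interpret g: comm_ring_hom "gcst :: real \<Rightarrow> ('a \<Rightarrow>\<^sub>0 real)" by (rule gcst_hom)
  define B where "B = below Rp lm"
  define SB where "SB = strictly_below Rp lm"
  have lmB: "lm \<in> B" unfolding B_def below_def using lam_dom dom_le_refl by auto
  have Bimg: "lam ` {1..n} = B" and inj: "inj_on lam {1..n}"
    using enum unfolding B_def bij_betw_def by auto
  have finB: "finite B" using Bimg by auto
  have npos: "1 \<le> n" using lmB Bimg by auto
  have Bdom: "B \<subseteq> dominant Rp" unfolding B_def below_def by auto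
  have SB_eq: "SB = B - {lm}" unfolding SB_def B_def below_def strictly_below_def dom_lt_def by auto
  have lamdom: "lam i \<in> dominant Rp" if "i \<in> {1..n}" for i using that Bimg Bdom by auto
  have below_sub: "below Rp (lam i) \<subseteq> B" if "i \<in> {1..n}" for i
  proof
    fix \<mu> assume "\<mu> \<in> below Rp (lam i)"
    moreover have "dom_le Rp (lam i) lm" using that Bimg unfolding B_def below_def by auto
    ultimately show "\<mu> \<in> B" unfolding B_def below_def using dom_le_trans by blast
  qed
  have L: "lam j \<notin> below Rp (lam i)" if "i \<in> {1..n}" "j \<in> {1..n}" "i < j" for i j
  proof
    assume "lam j \<in> below Rp (lam i)"
    moreover have "lam j \<noteq> lam i" using inj that by (metis inj_on_eq_iff less_irrefl)
    ultimately have "dom_lt Rp (lam j) (lam i)" unfolding below_def dom_lt_def by auto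
    then have "j < i" using enum_refines that(1,2) by blast
    then show False using that(3) by simp
  qed
  have ab0: "a (lam i) (lam j) = 0 \<and> b (lam i) (lam j) = 0" if "i \<in> {1..n}" "j \<in> {1..n}" "i < j" for i j
    using ab_zero lamdom[OF that(1)] L[OF that] by blast

  define N where "N = hess_matrix R n lam lm \<epsilon> a b"
  define Mr where "Mr = mat n n (\<lambda>(i,j). if j = 0 then 0 else if i + 1 < j then 0
        else if i + 1 = j then \<epsilon> (lam j) - \<epsilon> lm
        else b (lam (i + 1)) (lam j) - \<epsilon> lm * a (lam (i + 1)) (lam j))"
  define c where "c i = cofactor Mr i 0" for i
  have N: "N \<in> carrier_mat n n" unfolding N_def hess_matrix_def by simp
  have Mr: "Mr \<in> carrier_mat n n" unfolding Mr_def by simp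

  have F1: "cofactor N i 0 = gcst (c i)" if "i < n" for i
  proof -
    have "mat_delete N i 0 = map_mat gcst (mat_delete Mr i 0)"
      unfolding mat_delete_def N_def Mr_def hess_matrix_def
      by (intro eq_matI) (auto simp: gcst_def)
    then show ?thesis unfolding c_def cofactor_def by (simp add: hom_distribs)
  qed
  have F2: "det N = (\<Sum>i<n. scal (c i) (monW R (lam (i + 1))))"
  proof -
    have "det N = (\<Sum>i<n. N $$ (i,0) * cofactor N i 0)"
      using laplace_expansion_column[OF N, of 0] npos by simp
    also have "\<dots> = (\<Sum>i<n. scal (c i) (monW R (lam (i + 1))))"
    proof (intro sum.cong refl)
      fix i assume "i \<in> {..<n}"
      then have "i < n" by simp
      moreover have "N $$ (i,0) = monW R (lam (i + 1))" using \<open>i < n\<close> by (simp add: N_def hess_matrix_def)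
      ultimately show "N $$ (i,0) * cofactor N i 0 = scal (c i) (monW R (lam (i + 1)))"
        by (simp add: F1 scal_def mult.commute)
    qed
    finally show ?thesis .
  qed
  have F4: "Mr $$ (i,j) = b (lam (i + 1)) (lam j) - \<epsilon> lm * a (lam (i + 1)) (lam j)"
    if "i < n" "0 < j" "j < n" for i j
  proof -
    consider "i + 1 < j" | "i + 1 = j" | "j < i + 1" by linarith
    then show ?thesis
    proof cases
      case 1
      then show ?thesis using ab0[of "i+1" j] that by (simp add: Mr_def)
    next
      case 2
      then show ?thesis using that a_exp b_exp lamdom[of j] by (simp add: Mr_def)
    qed (use that in \<open>simp add: Mr_def\<close>)
  qed
  have F3: "(\<Sum>i<n. c i * (b (lam (i + 1)) (lam j) - \<epsilon> lm * a (lam (i + 1)) (lam j))) = 0"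
    if "0 < j" "j < n" for j
  proof -
    have "(\<Sum>i<n. c i * (b (lam (i + 1)) (lam j) - \<epsilon> lm * a (lam (i + 1)) (lam j)))
        = (\<Sum>i<n. Mr $$ (i,j) * cofactor Mr i 0)"
      by (intro sum.cong refl) (simp add: F4 that c_def mult.commute)
    also have "\<dots> = 0" by (rule col_comb_zero[OF Mr that])
    finally show ?thesis .
  qed
  have F3n: "(\<Sum>i<n. c i * (b (lam (i + 1)) lm - \<epsilon> lm * a (lam (i + 1)) lm)) = 0"
  proof (intro sum.neutral ballI)
    fix i assume i: "i \<in> {..<n}"
    show "c i * (b (lam (i + 1)) lm - \<epsilon> lm * a (lam (i + 1)) lm) = 0"
    proof (cases "i + 1 = n")
      case True
      then show ?thesis using a_exp b_exp lam_dom enum_last by simp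
    next
      case False
      then show ?thesis using ab0[of "i+1" n] i npos enum_last by simp
    qed
  qed
  have F5: "c (n - 1) = (-1) ^ (n - 1) * (\<Prod>k<n - 1. \<epsilon> (lam (k + 1)) - \<epsilon> lm)"
  proof -
    have Md: "mat_delete Mr (n - 1) 0 \<in> carrier_mat (n - 1) (n - 1)"
      using mat_delete_carrier[OF Mr] .
    have "det (mat_delete Mr (n - 1) 0) = prod_list (diag_mat (mat_delete Mr (n - 1) 0))"
      by (rule det_lower_triangular[OF _ Md]) (auto simp: mat_delete_def Mr_def)
    also have "\<dots> = (\<Prod>k<n - 1. \<epsilon> (lam (k + 1)) - \<epsilon> lm)"
      unfolding diag_mat_def prod.list_conv_set_nth
      by (intro prod.cong) (auto simp: mat_delete_def Mr_def)
    finally show ?thesis unfolding c_def cofactor_def by simp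
  qed
  define E where "E = (\<Prod>\<mu>\<in>SB. \<epsilon> lm - \<epsilon> \<mu>)"
  have SBimg: "SB = lam ` {1..<n}"
  proof -
    have e: "{1..<n} = {1..n} - {n}" by auto
    have "lam ` ({1..n} - {n}) = B - {lm}"
      using inj_on_image_set_diff[OF inj, of "{1..n}" "{n}"] Bimg enum_last npos by simp
    then show ?thesis using SB_eq e by simp
  qed
  have E_eq: "E = c (n - 1)"
  proof -
    have injS: "inj_on lam {1..<n}" using inj by (rule inj_on_subset) auto
    have "E = (\<Prod>k\<in>{1..<n}. \<epsilon> lm - \<epsilon> (lam k))"
      unfolding E_def SBimg using prod.reindex[OF injS, of "\<lambda>\<mu>. \<epsilon> lm - \<epsilon> \<mu>"] by simp
    also have "\<dots> = (\<Prod>k<n - 1. \<epsilon> lm - \<epsilon> (lam (k + 1)))"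
    proof -
      have "{1..<n} = Suc ` {..<n - 1}"
      proof -
        have "Suc ` {..<n - 1} = {1..n - 1}" by (rule image_Suc_lessThan)
        also have "\<dots> = {1..<n}" using npos by auto
        finally show ?thesis by simp
      qed
      then show ?thesis by (simp add: prod.reindex)
    qed
    also have "\<dots> = (\<Prod>k<n - 1. (-1) * (\<epsilon> (lam (k + 1)) - \<epsilon> lm))"
      by (intro prod.cong refl) simp
    also have "\<dots> = (-1) ^ (n - 1) * (\<Prod>k<n - 1. \<epsilon> (lam (k + 1)) - \<epsilon> lm)"
      by (simp only: prod.distrib prod_constant card_lessThan)
    finally show ?thesis using F5 by simp
  qed
  have Enz: "E \<noteq> 0"
    unfolding E_def
  proof (subst prod_zero_iff)
    show "finite SB" using SB_eq finB by simp
    show "\<not> (\<exists>\<mu>\<in>SB. \<epsilon> lm - \<epsilon> \<mu> = 0)"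
    proof
      assume "\<exists>\<mu>\<in>SB. \<epsilon> lm - \<epsilon> \<mu> = 0"
      then obtain \<mu> where m: "\<mu> \<in> dominant Rp" "dom_lt Rp \<mu> lm" "\<epsilon> lm = \<epsilon> \<mu>"
        unfolding SB_def strictly_below_def by auto
      then show False using regular lam_dom by metis
    qed
  qed
  define p where "p = scal (1 / E) (det N)"
  have p_eq: "p = (\<Sum>i<n. scal (c i / E) (monW R (lam (i + 1))))"
    unfolding p_def F2 scal_sum_right scal_scal by simp
  define ix where "ix \<mu> = inv_into {1..n} lam \<mu>" for \<mu>
  have ix: "ix \<mu> \<in> {1..n}" "lam (ix \<mu>) = \<mu>" if "\<mu> \<in> B" for \<mu>
    using that Bimg inj unfolding ix_def by (auto intro: inv_into_into f_inv_into_f)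
  have ix_lam: "ix (lam k) = k" if "k \<in> {1..n}" for k
    using inj that unfolding ix_def by simp
  have reidx: "(\<Sum>i<n. f (i + 1)) = (\<Sum>\<mu>\<in>B. f (ix \<mu>))" for f :: "nat \<Rightarrow> 'b::comm_monoid_add"
  proof -
    have "(\<Sum>i<n. f (i + 1)) = (\<Sum>k\<in>{1..n}. f k)"
    proof -
      have "{1..n} = Suc ` {..<n}" by (simp add: image_Suc_lessThan)
      then show ?thesis by (simp add: sum.reindex)
    qed
    also have "\<dots> = (\<Sum>k\<in>{1..n}. f (ix (lam k)))" by (intro sum.cong refl) (simp add: ix_lam)
    also have "\<dots> = (\<Sum>\<mu>\<in>B. f (ix \<mu>))" using sum.reindex[OF inj, of "\<lambda>\<mu>. f (ix \<mu>)"] Bimg by simp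
    finally show ?thesis .
  qed
  have part2: "\<exists>cc. p = monW R lm + (\<Sum>\<mu>\<in>SB. scal (cc \<mu>) (monW R \<mu>))"
  proof
    have "p = (\<Sum>\<mu>\<in>B. scal (c (ix \<mu> - 1) / E) (monW R (lam (ix \<mu>))))"
      unfolding p_eq using reidx[of "\<lambda>k. scal (c (k - 1) / E) (monW R (lam k))"] by simp
    also have "\<dots> = (\<Sum>\<mu>\<in>B. scal (c (ix \<mu> - 1) / E) (monW R \<mu>))"
      by (intro sum.cong refl) (simp add: ix)
    also have "\<dots> = scal (c (ix lm - 1) / E) (monW R lm) + (\<Sum>\<mu>\<in>SB. scal (c (ix \<mu> - 1) / E) (monW R \<mu>))"
      unfolding SB_eq using finB lmB by (simp add: sum.remove)
    also have "c (ix lm - 1) / E = 1"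
      using ix_lam[of n] enum_last npos E_eq Enz by simp
    finally show "p = monW R lm + (\<Sum>\<mu>\<in>SB. scal (c (ix \<mu> - 1) / E) (monW R \<mu>))" by simp
  qed
  have mAW: "monW R \<nu> \<in> AW R" if "\<nu> \<in> dominant Rp" for \<nu>
  proof -
    have "\<mu> \<in> below Rp \<nu> \<Longrightarrow> s \<mu> \<in> AW R" for \<mu>
      using basis unfolding is_basis_AW_def below_def by auto
    then show ?thesis using a_exp that by (auto intro!: AW_sum AW_scal)
  qed
  have ext: "(\<Sum>\<mu>\<in>below Rp (lam k). scal (f \<mu>) (s \<mu>)) = (\<Sum>\<mu>\<in>B. scal (f \<mu>) (s \<mu>))"
    if "k \<in> {1..n}" "\<And>\<mu>. \<mu> \<notin> below Rp (lam k) \<Longrightarrow> f \<mu> = 0" for k f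
    by (rule sum.mono_neutral_left[OF finB below_sub[OF that(1)]]) (use that(2) in auto)
  have Dm: "D (monW R (lam k)) = (\<Sum>\<mu>\<in>B. scal (b (lam k) \<mu>) (s \<mu>))" if "k \<in> {1..n}" for k
    using b_exp lamdom[OF that] ext[OF that, of "b (lam k)"] ab_zero by auto
  have mm: "monW R (lam k) = (\<Sum>\<mu>\<in>B. scal (a (lam k) \<mu>) (s \<mu>))" if "k \<in> {1..n}" for k
    using a_exp lamdom[OF that] ext[OF that, of "a (lam k)"] ab_zero by auto
  have coef: "(\<Sum>i<n. c i / E * b (lam (i + 1)) \<mu>) = (\<Sum>i<n. \<epsilon> lm * (c i / E * a (lam (i + 1)) \<mu>))"
    if "\<mu> \<in> B" for \<mu>
  proof -
    have "(\<Sum>i<n. c i * (b (lam (i + 1)) \<mu> - \<epsilon> lm * a (lam (i + 1)) \<mu>)) = 0"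
    proof (cases "ix \<mu> = n")
      case True
      then have "\<mu> = lm" using ix[OF that] enum_last by metis
      then show ?thesis using F3n by simp
    next
      case False
      then have "0 < ix \<mu>" "ix \<mu> < n" using ix[OF that] by auto
      then show ?thesis using F3[of "ix \<mu>"] ix[OF that] by simp
    qed
    then have "(\<Sum>i<n. c i * b (lam (i + 1)) \<mu>) = (\<Sum>i<n. \<epsilon> lm * (c i * a (lam (i + 1)) \<mu>))"
      by (simp add: algebra_simps sum_subtractf sum_distrib_left)
    then have "(\<Sum>i<n. c i * b (lam (i + 1)) \<mu>) / E = (\<Sum>i<n. \<epsilon> lm * (c i * a (lam (i + 1)) \<mu>)) / E"
      by simp
    then show ?thesis by (simp add: sum_divide_distrib)
  qed
  have kin: "i + 1 \<in> {1..n}" if "i \<in> {..<n}" for i using that by auto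
  have part1: "D p = scal (\<epsilon> lm) p"
  proof -
    have "D p = (\<Sum>i<n. scal (c i / E) (D (monW R (lam (i + 1)))))"
      unfolding p_eq by (rule D_sum[OF lin]) (auto intro!: mAW lamdom)
    also have "\<dots> = (\<Sum>i<n. \<Sum>\<mu>\<in>B. scal (c i / E * b (lam (i + 1)) \<mu>) (s \<mu>))"
    proof (intro sum.cong refl)
      fix i assume "i \<in> {..<n}"
      then show "scal (c i / E) (D (monW R (lam (i + 1)))) = (\<Sum>\<mu>\<in>B. scal (c i / E * b (lam (i + 1)) \<mu>) (s \<mu>))"
        using Dm[OF kin] by (simp add: scal_sum_right scal_scal)
    qed
    also have "\<dots> = (\<Sum>\<mu>\<in>B. scal (\<Sum>i<n. c i / E * b (lam (i + 1)) \<mu>) (s \<mu>))"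
      by (subst sum.swap) (simp add: scal_sum_left)
    also have "\<dots> = (\<Sum>\<mu>\<in>B. scal (\<Sum>i<n. \<epsilon> lm * (c i / E * a (lam (i + 1)) \<mu>)) (s \<mu>))"
    proof (intro sum.cong refl)
      fix \<mu> assume "\<mu> \<in> B"
      then show "scal (\<Sum>i<n. c i / E * b (lam (i + 1)) \<mu>) (s \<mu>) = scal (\<Sum>i<n. \<epsilon> lm * (c i / E * a (lam (i + 1)) \<mu>)) (s \<mu>)"
        by (simp only: coef)
    qed
    also have "\<dots> = (\<Sum>i<n. \<Sum>\<mu>\<in>B. scal (\<epsilon> lm * (c i / E * a (lam (i + 1)) \<mu>)) (s \<mu>))"
      by (subst sum.swap) (simp add: scal_sum_left)
    also have "\<dots> = scal (\<epsilon> lm) p"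
      unfolding p_eq scal_sum_right
    proof (intro sum.cong refl)
      fix i assume "i \<in> {..<n}"
      then show "(\<Sum>\<mu>\<in>B. scal (\<epsilon> lm * (c i / E * a (lam (i + 1)) \<mu>)) (s \<mu>)) = scal (\<epsilon> lm) (scal (c i / E) (monW R (lam (i + 1))))"
        using mm[OF kin] by (simp add: scal_sum_right scal_scal)
    qed
    finally show ?thesis .
  qed
  show ?thesis unfolding Let_def
    using part1 part2 unfolding p_def E_def N_def SB_def by simp
qed

end
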